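(* Let $G,H\in\mathfrak{D}$ and $\xi\in\mathcal{H}(G,H)$. For every $H'\in\mathfrak{D}$ let $$\Theta_{G,H'}(\xi)=\{\zeta\in\mathcal{H}(G,H'):\mathcal{G}(\zeta)=\mathcal{G}(\xi)\}.$$ Then $\#\Theta_{G,H'}(\xi)=\#\mathcal{S}(\mathcal{G}(\xi),H')$ for every $H'\in\mathfrak{D}$.
   Context: **Digraphs and homomorphisms.** - A digraph $G$ is a pair $(V(G),A(G))$, where $V(G)$ is a finite non-empty set and $A(G)\subseteq V(G)\times V(G)$. Arcs are written $vw$. - An arc $vw$ with $v\ne w$ is proper. - A homomorphism $\xi:G\to H$ is a map $V(G)\to V(H)$ with $\xi(v)\xi(w)\in A(H)$ for all $vw\in A(G)$. $\mathcal{H}(G,H)$ is the set of homomorphisms. - A homomorphism is strict if it maps every proper arc to a proper arc. $\mathcal{S}(G,H)$ is the set of strict homomorphisms. - $\mathfrak{D}$ is the class of all digraphs. **Connectivity.** - Two vertices $u,w$ are adjacent if $uw\in A(G)$ or $wu\in A(G)$. - For $X\subseteq V(G)$ and $v,w\in X$, the vertices $v$ and $w$ are connected in $X$ if $v=w$, or if there are $z_0=v,\dots,z_I=w$ in $X$ with consecutive terms adjacent. - $\gamma_X(v)$ is the set of $w\in X$ connected to $v$ in $X$. - $\Gamma_\xi(v):=\gamma_{\xi^{-1}(\xi(v))}(v)$. **The quotient digraph.** For $\xi\in\mathcal{H}(G,H)$, $\mathcal{G}(\xi)$ is the digraph with: - vertex set $\{\Gamma_\xi(v):v\in V(G)\}$,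 a partition of $V(G)$; - arcs $\mathfrak{a}\mathfrak{b}$ whenever there are $a\in\mathfrak{a}$, $b\in\mathfrak{b}$ with $ab\in A(G)$. *)

theory Defs
  imports Main "HOL-Library.FuncSet"
begin

type_synonym 'a digraph = "'a set \<times> ('a \<times> 'a) set"

definition verts :: "'a digraph \<Rightarrow> 'a set" where "verts G = fst G"
definition arcs :: "'a digraph \<Rightarrow> ('a \<times> 'a) set" where "arcs G = snd G"

definition is_digraph :: "'a digraph \<Rightarrow> bool" where
  "is_digraph G \<longleftrightarrow> finite (verts G) \<and> verts G \<noteq> {} \<and> arcs G \<subseteq> verts G \<times> verts G"

definition homs :: "'a digraph \<Rightarrow> 'b digraph \<Rightarrow> ('a \<Rightarrow> 'b) set" where
  "homs G H = {\<xi> \<in> verts G \<rightarrow>\<^sub>E verts H. \<forall>(v,w)\<in>arcs G. (\<xi> v, \<xi> w) \<in> arcs H}"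

definition strict_homs :: "'a digraph \<Rightarrow> 'b digraph \<Rightarrow> ('a \<Rightarrow> 'b) set" where
  "strict_homs G H = {\<xi> \<in> homs G H. \<forall>(v,w)\<in>arcs G. v \<noteq> w \<longrightarrow> \<xi> v \<noteq> \<xi> w}"

definition adj_in :: "'a digraph \<Rightarrow> 'a set \<Rightarrow> ('a \<times> 'a) set" where
  "adj_in G X = {(u,w). u \<in> X \<and> w \<in> X \<and> ((u,w) \<in> arcs G \<or> (w,u) \<in> arcs G)}"

definition connected_in :: "'a digraph \<Rightarrow> 'a set \<Rightarrow> 'a \<Rightarrow> 'a \<Rightarrow> bool" where
  "connected_in G X v w \<longleftrightarrow> v \<in> X \<and> w \<in> X \<and> (v,w) \<in> (adj_in G X)\<^sup>*"

definition gamma :: "'a digraph \<Rightarrow> 'a set \<Rightarrow> 'a \<Rightarrow> 'a set" where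
  "gamma G X v = {w \<in> X. connected_in G X v w}"

definition Gamma :: "'a digraph \<Rightarrow> ('a \<Rightarrow> 'b) \<Rightarrow> 'a \<Rightarrow> 'a set" where
  "Gamma G \<xi> v = gamma G {u \<in> verts G. \<xi> u = \<xi> v} v"

definition quot :: "'a digraph \<Rightarrow> ('a \<Rightarrow> 'b) \<Rightarrow> 'a set digraph" where
  "quot G \<xi> = (Gamma G \<xi> ` verts G,
     {(\<aa>, \<bb>). \<aa> \<in> Gamma G \<xi> ` verts G \<and> \<bb> \<in> Gamma G \<xi> ` verts G \<and>
        (\<exists>a\<in>\<aa>. \<exists>b\<in>\<bb>. (a,b) \<in> arcs G)})"

end

theory Submission
  imports Defs
begin

lemma Gamma_mem: "v \<in> verts G \<Longrightarrow> v \<in> Gamma G f v"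
  by (simp add: Gamma_def gamma_def connected_in_def)

lemma Gamma_sub: "w \<in> Gamma G f v \<Longrightarrow> w \<in> verts G \<and> f w = f v"
  by (auto simp: Gamma_def gamma_def)

lemma rtr_sym: "(a,b) \<in> (adj_in G X)\<^sup>* \<Longrightarrow> (b,a) \<in> (adj_in G X)\<^sup>*"
proof (induction rule: rtrancl_induct)
  case base then show ?case by simp
next
  case (step y z)
  then have "(z,y) \<in> adj_in G X" by (auto simp: adj_in_def)
  then show ?case using step by (meson converse_rtrancl_into_rtrancl)
qed

lemma Gamma_eq: assumes "w \<in> Gamma G f v" shows "Gamma G f w = Gamma G f v"
proof -
  have fw: "f w = f v" using Gamma_sub[OF assms] by simp
  let ?X = "{u \<in> verts G. f u = f v}"
  have vw: "(v,w) \<in> (adj_in G ?X)\<^sup>*" and vX: "v \<in> ?X"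
    using assms by (auto simp: Gamma_def gamma_def connected_in_def)
  have wv: "(w,v) \<in> (adj_in G ?X)\<^sup>*" using rtr_sym[OF vw] .
  show ?thesis unfolding Gamma_def gamma_def connected_in_def fw
    using vw wv vX assms by (auto simp: Gamma_def gamma_def connected_in_def
        intro: rtrancl_trans)
qed

lemma Gamma_arc: "(a,b) \<in> arcs G \<Longrightarrow> arcs G \<subseteq> verts G \<times> verts G \<Longrightarrow> f a = f b
   \<Longrightarrow> b \<in> Gamma G f a"
  unfolding Gamma_def gamma_def connected_in_def
  by (auto simp: adj_in_def intro!: r_into_rtrancl)

lemma Gamma_sub_same:
  assumes arcs: "arcs G \<subseteq> verts G \<times> verts G"
    and same: "\<And>a b. (a,b) \<in> arcs G \<Longrightarrow> (f a = f b \<longleftrightarrow> g a = g b)"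
    and v: "v \<in> verts G"
  shows "Gamma G f v \<subseteq> Gamma G g v"
proof
  fix w assume w: "w \<in> Gamma G f v"
  let ?Xf = "{u \<in> verts G. f u = f v}"
  let ?Xg = "{u \<in> verts G. g u = g v}"
  have "(v,w) \<in> (adj_in G ?Xf)\<^sup>*" using w by (auto simp: Gamma_def gamma_def connected_in_def)
  then have "w \<in> ?Xg \<and> (v,w) \<in> (adj_in G ?Xg)\<^sup>*"
  proof (induction rule: rtrancl_induct)
    case base then show ?case using v by simp
  next
    case (step y z)
    then have yz: "y \<in> ?Xf" "z \<in> ?Xf" "(y,z) \<in> arcs G \<or> (z,y) \<in> arcs G"
      by (auto simp: adj_in_def)
    then have "g y = g z" using same by fastforce
    then have "z \<in> ?Xg" using step yz by auto
    then have "(y,z) \<in> adj_in G ?Xg" using step yz by (auto simp: adj_in_def)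
    then show ?case using step \<open>z \<in> ?Xg\<close> by (meson rtrancl_into_rtrancl)
  qed
  then show "w \<in> Gamma G g v" using v by (auto simp: Gamma_def gamma_def connected_in_def)
qed

lemma Gamma_same:
  assumes arcs: "arcs G \<subseteq> verts G \<times> verts G"
    and same: "\<And>a b. (a,b) \<in> arcs G \<Longrightarrow> (f a = f b \<longleftrightarrow> g a = g b)"
    and v: "v \<in> verts G"
  shows "Gamma G f v = Gamma G g v"
proof
  show "Gamma G f v \<subseteq> Gamma G g v" by (rule Gamma_sub_same[OF arcs same v])
  show "Gamma G g v \<subseteq> Gamma G f v" by (rule Gamma_sub_same[OF arcs _ v]) (use same in blast)
qed

lemma quot_verts: "verts (quot G f) = Gamma G f ` verts G"
  by (simp add: quot_def verts_def)

lemma quot_arcs: "(A,B) \<in> arcs (quot G f) \<longleftrightarrow>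
   A \<in> Gamma G f ` verts G \<and> B \<in> Gamma G f ` verts G \<and> (\<exists>a\<in>A. \<exists>b\<in>B. (a,b) \<in> arcs G)"
  by (simp add: quot_def arcs_def)

theorem lemma3:
  fixes G :: "'a digraph" and H :: "'b digraph" and H' :: "'c digraph" and \<xi> :: "'a \<Rightarrow> 'b"
  assumes "is_digraph G" and "is_digraph H" and "is_digraph H'"
    and "\<xi> \<in> homs G H"
  shows "card {\<zeta> \<in> homs G H'. quot G \<zeta> = quot G \<xi>} = card (strict_homs (quot G \<xi>) H')"
proof -
  have arcsG: "arcs G \<subseteq> verts G \<times> verts G" using assms(1) by (simp add: is_digraph_def)
  let ?V = "verts G"
  let ?P = "Gamma G \<xi> ` ?V"
  let ?T = "{\<zeta> \<in> homs G H'. quot G \<zeta> = quot G \<xi>}"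
  let ?S = "strict_homs (quot G \<xi>) H'"
  define F where "F \<sigma> = (\<lambda>v\<in>?V. \<sigma> (Gamma G \<xi> v))" for \<sigma> :: "'a set \<Rightarrow> 'c"
  have Sdef: "\<sigma> \<in> ?S \<longleftrightarrow> \<sigma> \<in> ?P \<rightarrow>\<^sub>E verts H' \<and>
      (\<forall>A B. (A,B) \<in> arcs (quot G \<xi>) \<longrightarrow> (\<sigma> A, \<sigma> B) \<in> arcs H' \<and> (A \<noteq> B \<longrightarrow> \<sigma> A \<noteq> \<sigma> B))"
    for \<sigma> by (auto simp: strict_homs_def homs_def quot_verts)
  have quot_eq: "quot G \<zeta> = quot G \<xi> \<longleftrightarrow> (\<forall>v\<in>?V. Gamma G \<zeta> v = Gamma G \<xi> v)" for \<zeta> :: "'a \<Rightarrow> 'c"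
  proof
    assume q: "quot G \<zeta> = quot G \<xi>"
    show "\<forall>v\<in>?V. Gamma G \<zeta> v = Gamma G \<xi> v"
    proof
      fix v assume v: "v \<in> ?V"
      have "Gamma G \<zeta> ` ?V = ?P" using q quot_verts by metis
      then obtain u where u: "u \<in> ?V" "Gamma G \<zeta> v = Gamma G \<xi> u" using v by blast
      have "v \<in> Gamma G \<xi> u" using Gamma_mem[OF v, of \<zeta>] u by simp
      then show "Gamma G \<zeta> v = Gamma G \<xi> v" using Gamma_eq u by metis
    qed
  next
    assume "\<forall>v\<in>?V. Gamma G \<zeta> v = Gamma G \<xi> v"
    then have "Gamma G \<zeta> ` ?V = ?P" by (metis image_cong)
    then show "quot G \<zeta> = quot G \<xi>" by (simp add: quot_def)
  qed
  have same_xi: "\<xi> a = \<xi> b \<longleftrightarrow> Gamma G \<xi> a = Gamma G \<xi> b" if "(a,b) \<in> arcs G" for a b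
  proof
    assume "\<xi> a = \<xi> b"
    then have "b \<in> Gamma G \<xi> a" using Gamma_arc[OF that arcsG] by blast
    then show "Gamma G \<xi> a = Gamma G \<xi> b" using Gamma_eq by metis
  next
    assume "Gamma G \<xi> a = Gamma G \<xi> b"
    moreover have "b \<in> Gamma G \<xi> b" using that arcsG by (auto intro: Gamma_mem)
    ultimately show "\<xi> a = \<xi> b" using Gamma_sub by metis
  qed
  have inj: "inj_on F ?S"
  proof (rule inj_onI)
    fix \<sigma>1 \<sigma>2 assume s1: "\<sigma>1 \<in> ?S" and s2: "\<sigma>2 \<in> ?S" and eq: "F \<sigma>1 = F \<sigma>2"
    show "\<sigma>1 = \<sigma>2"
    proof
      fix A show "\<sigma>1 A = \<sigma>2 A"
      proof (cases "A \<in> ?P")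
        case True
        then obtain v where "v \<in> ?V" "A = Gamma G \<xi> v" by blast
        then show ?thesis using fun_cong[OF eq, of v] by (simp add: F_def)
      next
        case False
        then show ?thesis using s1 s2 unfolding Sdef by (auto simp: PiE_def extensional_def)
      qed
    qed
  qed
  have img: "F ` ?S = ?T"
  proof
    show "F ` ?S \<subseteq> ?T"
    proof
      fix \<zeta> assume "\<zeta> \<in> F ` ?S"
      then obtain \<sigma> where s: "\<sigma> \<in> ?S" and z: "\<zeta> = F \<sigma>" by blast
      have sp: "\<sigma> \<in> ?P \<rightarrow>\<^sub>E verts H'" and sa: "\<And>A B. (A,B) \<in> arcs (quot G \<xi>) \<Longrightarrow>
         (\<sigma> A, \<sigma> B) \<in> arcs H' \<and> (A \<noteq> B \<longrightarrow> \<sigma> A \<noteq> \<sigma> B)" using s unfolding Sdef by auto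
      have qa: "(Gamma G \<xi> a, Gamma G \<xi> b) \<in> arcs (quot G \<xi>)" if "(a,b) \<in> arcs G" for a b
        using that arcsG Gamma_mem[of a G \<xi>] Gamma_mem[of b G \<xi>] unfolding quot_arcs by blast
      have hom: "\<zeta> \<in> homs G H'"
        unfolding homs_def using sp sa qa arcsG by (auto simp: z F_def)
      have "\<zeta> a = \<zeta> b \<longleftrightarrow> \<xi> a = \<xi> b" if ab: "(a,b) \<in> arcs G" for a b
      proof -
        have "a \<in> ?V" "b \<in> ?V" using ab arcsG by auto
        then have "\<zeta> a = \<zeta> b \<longleftrightarrow> \<sigma> (Gamma G \<xi> a) = \<sigma> (Gamma G \<xi> b)" by (simp add: z F_def)
        also have "\<dots> \<longleftrightarrow> Gamma G \<xi> a = Gamma G \<xi> b" using sa[OF qa[OF ab]] by auto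
        finally show ?thesis using same_xi[OF ab] by simp
      qed
      then have "\<forall>v\<in>?V. Gamma G \<zeta> v = Gamma G \<xi> v" using Gamma_same[OF arcsG] by blast
      then show "\<zeta> \<in> ?T" using hom quot_eq by blast
    qed
  next
    show "?T \<subseteq> F ` ?S"
    proof
      fix \<zeta> assume zT: "\<zeta> \<in> ?T"
      then have hom: "\<zeta> \<in> homs G H'" and gz: "\<And>v. v \<in> ?V \<Longrightarrow> Gamma G \<zeta> v = Gamma G \<xi> v"
        using quot_eq by auto
      define \<sigma> where "\<sigma> = (\<lambda>A\<in>?P. \<zeta> (SOME a. a \<in> A))"
      have sv: "\<sigma> (Gamma G \<xi> v) = \<zeta> v" if v: "v \<in> ?V" for v
      proof -
        have ne: "v \<in> Gamma G \<xi> v" using Gamma_mem[OF v] .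
        then have "(SOME a. a \<in> Gamma G \<xi> v) \<in> Gamma G \<xi> v" by (rule someI)
        then have "(SOME a. a \<in> Gamma G \<xi> v) \<in> Gamma G \<zeta> v" using gz[OF v] by simp
        then have "\<zeta> (SOME a. a \<in> Gamma G \<xi> v) = \<zeta> v" using Gamma_sub by metis
        then show ?thesis using v by (simp add: \<sigma>_def)
      qed
      have zV: "\<And>v. v \<in> ?V \<Longrightarrow> \<zeta> v \<in> verts H'" and zext: "\<zeta> \<in> extensional ?V"
        and zarc: "\<And>a b. (a,b) \<in> arcs G \<Longrightarrow> (\<zeta> a, \<zeta> b) \<in> arcs H'"
        using hom by (auto simp: homs_def PiE_def)
      have "\<sigma> \<in> ?S" unfolding Sdef
      proof (intro conjI allI impI)
        show "\<sigma> \<in> ?P \<rightarrow>\<^sub>E verts H'" using sv zV by (auto simp: PiE_def Pi_def) (simp add: \<sigma>_def)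
      next
        fix A B assume "(A,B) \<in> arcs (quot G \<xi>)"
        then obtain a b where ab: "a \<in> A" "b \<in> B" "(a,b) \<in> arcs G" "A \<in> ?P" "B \<in> ?P"
          unfolding quot_arcs by blast
        have abV: "a \<in> ?V" "b \<in> ?V" using ab arcsG by auto
        have "A = Gamma G \<xi> a" "B = Gamma G \<xi> b" using ab Gamma_eq by (metis imageE)+
        then have sA: "\<sigma> A = \<zeta> a" and sB: "\<sigma> B = \<zeta> b" using sv abV by auto
        show "(\<sigma> A, \<sigma> B) \<in> arcs H'" using sA sB zarc ab by simp
        {
          assume "A \<noteq> B"
          show "\<sigma> A \<noteq> \<sigma> B"
          proof
            assume "\<sigma> A = \<sigma> B"
            then have "\<zeta> a = \<zeta> b" using sA sB by simp
            then have "b \<in> Gamma G \<zeta> a" using Gamma_arc[OF ab(3) arcsG] by blast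
            then have "Gamma G \<zeta> b = Gamma G \<zeta> a" using Gamma_eq by metis
            then show False using gz abV \<open>A \<noteq> B\<close> \<open>A = Gamma G \<xi> a\<close> \<open>B = Gamma G \<xi> b\<close> by metis
          qed
        }
      qed
      moreover have "F \<sigma> = \<zeta>"
      proof
        fix v show "F \<sigma> v = \<zeta> v"
          using sv zext by (cases "v \<in> ?V") (auto simp: F_def extensional_def)
      qed
      ultimately show "\<zeta> \<in> F ` ?S" by blast
    qed
  qed
  have "card ?S = card (F ` ?S)" using card_image[OF inj] by simp
  then show ?thesis using img by simp
qed

end
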